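(* Let $\mathbb C$ be a pointed variety of universal algebras, $A$ an algebra in $\mathbb C$, and $X,Y$ subalgebras of $A$. Then (a) $[X,Y]_{\mathbb C,A}\subseteq [X,Y]_{A\mid 1}$. (b) If $A$ is the free algebra in $\mathbb C$ on a set $S$, and $X$ and $Y$ are the subalgebras freely generated by subsets $P$ and $Q$ of $S$ respectively, with $P\cap Q=\emptyset$, then $[X,Y]_{\mathbb C,A}=[X,Y]_{A\mid 1}$.
   Context: In a pointed variety, $0$ denotes the unique constant (whose value is a one-element subalgebra). A term $t(\mathbf w_1,\dots,\mathbf w_k,\mathbf x_1,\dots,\mathbf x_m,\mathbf y_1,\dots,\mathbf y_n)$ of $\mathbb C$, with $\{\mathbf x_1,\dots,\mathbf x_m\}$ and $\{\mathbf y_1,\dots,\mathbf y_n\}$ disjoint sets of variables, is a commutator term in $(\mathbf x_1,\dots,\mathbf x_m)$ and $(\mathbf y_1,\dots,\mathbf y_n)$ if the identities $t(\mathbf w_1,\dots,\mathbf w_k,0,\dots,0,\mathbf y_1,\dots,\mathbf y_n)=0=t(\mathbf w_1,\dots,\mathbf w_k,\mathbf x_1,\dots,\mathbf x_m,0,\dots,0)$ hold in $\mathbb C$. $[X,Y]_{\mathbb C,A}$ is the set of all elements $t_A(w_1,\dots,w_k,x_1,\dots,x_m,y_1,\dots,y_n)$ of $A$ where $t$ is such a commutator term, $w_i\in A$, $x_i\in X$, $y_i\in Y$. $[X,Y]_{A\mid 1}$ is the image under the homomorphism $[1_A,x,y]\colon A+X+Y\to A$ (with $x,y$ the inclusions)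 of the kernel (preimage of $0$) of the homomorphism $\langle[\iota_1,\iota_2,0],[\iota_1,0,\iota_2]\rangle\colon A+X+Y\to (A+X)\times_A(A+Y)$, where $\iota_i$ are coproduct injections and $(A+X)\times_A(A+Y)$ is the pullback of $[1,0]\colon A+X\to A$ and $[1,0]\colon A+Y\to A$. *)

theory Defs
  imports Main
begin

datatype ('f, 'v) trm = Var 'v | App 'f "('f, 'v) trm list"

fun wf_trm :: "('f \<Rightarrow> nat) \<Rightarrow> ('f, 'v) trm \<Rightarrow> bool" where
  "wf_trm ar (Var v) = True"
| "wf_trm ar (App f ts) = (length ts = ar f \<and> list_all (wf_trm ar) ts)"

fun subst :: "('v \<Rightarrow> ('f, 'w) trm) \<Rightarrow> ('f, 'v) trm \<Rightarrow> ('f, 'w) trm" where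
  "subst \<sigma> (Var v) = \<sigma> v"
| "subst \<sigma> (App f ts) = App f (map (subst \<sigma>) ts)"

fun vars :: "('f, 'v) trm \<Rightarrow> 'v set" where
  "vars (Var v) = {v}"
| "vars (App f ts) = \<Union> (set (map vars ts))"

fun eval :: "('f \<Rightarrow> 'a list \<Rightarrow> 'a) \<Rightarrow> ('v \<Rightarrow> 'a) \<Rightarrow> ('f, 'v) trm \<Rightarrow> 'a" where
  "eval F \<alpha> (Var v) = \<alpha> v"
| "eval F \<alpha> (App f ts) = F f (map (eval F \<alpha>) ts)"

definition closed_under :: "('f \<Rightarrow> nat) \<Rightarrow> ('f \<Rightarrow> 'a list \<Rightarrow> 'a) \<Rightarrow> 'a set \<Rightarrow> bool" where
  "closed_under ar F C \<longleftrightarrow> (\<forall>f as. length as = ar f \<and> set as \<subseteq> C \<longrightarrow> F f as \<in> C)"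

definition subalgebra :: "('f \<Rightarrow> nat) \<Rightarrow> ('f \<Rightarrow> 'a list \<Rightarrow> 'a) \<Rightarrow> 'a set \<Rightarrow> 'a set \<Rightarrow> bool" where
  "subalgebra ar F C X \<longleftrightarrow> X \<subseteq> C \<and> closed_under ar F X"

definition generated :: "('f \<Rightarrow> nat) \<Rightarrow> ('f \<Rightarrow> 'a list \<Rightarrow> 'a) \<Rightarrow> 'a set \<Rightarrow> 'a set \<Rightarrow> 'a set" where
  "generated ar F C G = \<Inter> {B. B \<subseteq> C \<and> G \<subseteq> B \<and> closed_under ar F B}"

definition in_variety ::
  "('f \<Rightarrow> nat) \<Rightarrow> (('f, nat) trm \<times> ('f, nat) trm) set \<Rightarrow> 'a set \<Rightarrow> ('f \<Rightarrow> 'a list \<Rightarrow> 'a) \<Rightarrow> bool" where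
  "in_variety ar E C F \<longleftrightarrow> closed_under ar F C \<and>
     (\<forall>(l, r) \<in> E. \<forall>\<alpha>. range \<alpha> \<subseteq> C \<longrightarrow> eval F \<alpha> l = eval F \<alpha> r)"

text \<open>With R = {} this is "s = t holds as an identity in the variety C"; with R the
  diagrams of some algebras it is the congruence defining an algebra presented by
  generators and relations in the variety C (e.g. a coproduct).\<close>
inductive deriv ::
  "('f \<Rightarrow> nat) \<Rightarrow> (('f, nat) trm \<times> ('f, nat) trm) set \<Rightarrow> (('f, 'g) trm \<times> ('f, 'g) trm) set
     \<Rightarrow> ('f, 'g) trm \<Rightarrow> ('f, 'g) trm \<Rightarrow> bool"
  for ar E R where
  refl: "wf_trm ar t \<Longrightarrow> deriv ar E R t t"
| sym: "deriv ar E R s t \<Longrightarrow> deriv ar E R t s"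
| trans: "deriv ar E R s t \<Longrightarrow> deriv ar E R t u \<Longrightarrow> deriv ar E R s u"
| ax: "(l, r) \<in> E \<Longrightarrow> (\<forall>v. wf_trm ar (\<sigma> v)) \<Longrightarrow> deriv ar E R (subst \<sigma> l) (subst \<sigma> r)"
| rel: "(s, t) \<in> R \<Longrightarrow> deriv ar E R s t"
| cong: "length ss = ar f \<Longrightarrow> list_all2 (deriv ar E R) ss ts \<Longrightarrow> deriv ar E R (App f ss) (App f ts)"

text \<open>Pointed variety: identities are well-formed, z is a constant, every constant equals z
  in the variety C, and {z} is a subalgebra (f(z,...,z) = z holds in the variety C).\<close>
definition pointed_variety ::
  "('f \<Rightarrow> nat) \<Rightarrow> (('f, nat) trm \<times> ('f, nat) trm) set \<Rightarrow> 'f \<Rightarrow> bool" where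
  "pointed_variety ar E z \<longleftrightarrow>
     (\<forall>(l, r) \<in> E. wf_trm ar l \<and> wf_trm ar r) \<and>
     ar z = 0 \<and>
     (\<forall>c. ar c = 0 \<longrightarrow> deriv ar E ({} :: (('f, nat) trm \<times> ('f, nat) trm) set) (App c []) (App z [])) \<and>
     (\<forall>f. deriv ar E ({} :: (('f, nat) trm \<times> ('f, nat) trm) set)
            (App f (replicate (ar f) (App z []))) (App z []))"

text \<open>Variables of a commutator term: Inl i = w_i, Inr (Inl i) = x_i, Inr (Inr i) = y_i.\<close>
type_synonym var3 = "nat + nat + nat"

definition kill_x :: "var3 \<Rightarrow> 'f \<Rightarrow> ('f, var3) trm" where
  "kill_x v z = (case v of Inr (Inl _) \<Rightarrow> App z [] | _ \<Rightarrow> Var v)"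

definition kill_y :: "var3 \<Rightarrow> 'f \<Rightarrow> ('f, var3) trm" where
  "kill_y v z = (case v of Inr (Inr _) \<Rightarrow> App z [] | _ \<Rightarrow> Var v)"

definition commutator_term ::
  "('f \<Rightarrow> nat) \<Rightarrow> (('f, nat) trm \<times> ('f, nat) trm) set \<Rightarrow> 'f \<Rightarrow> ('f, var3) trm \<Rightarrow> bool" where
  "commutator_term ar E z t \<longleftrightarrow> wf_trm ar t \<and>
     deriv ar E ({} :: (('f, var3) trm \<times> ('f, var3) trm) set) (subst (\<lambda>v. kill_x v z) t) (App z []) \<and>
     deriv ar E ({} :: (('f, var3) trm \<times> ('f, var3) trm) set) (subst (\<lambda>v. kill_y v z) t) (App z [])"

definition comm_CA ::
  "('f \<Rightarrow> nat) \<Rightarrow> (('f, nat) trm \<times> ('f, nat) trm) set \<Rightarrow> 'f \<Rightarrow> 'a set \<Rightarrow> ('f \<Rightarrow> 'a list \<Rightarrow> 'a)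
     \<Rightarrow> 'a set \<Rightarrow> 'a set \<Rightarrow> 'a set" where
  "comm_CA ar E z C F X Y =
     {eval F \<alpha> t | t \<alpha>. commutator_term ar E z t \<and>
        (\<forall>i. \<alpha> (Inl i) \<in> C \<and> \<alpha> (Inr (Inl i)) \<in> X \<and> \<alpha> (Inr (Inr i)) \<in> Y)}"

definition diagram :: "('f \<Rightarrow> nat) \<Rightarrow> ('f \<Rightarrow> 'a list \<Rightarrow> 'a) \<Rightarrow> 'a set \<Rightarrow> ('a \<Rightarrow> 'g)
     \<Rightarrow> (('f, 'g) trm \<times> ('f, 'g) trm) set" where
  "diagram ar F B g = {(App f (map (\<lambda>b. Var (g b)) bs), Var (g (F f bs))) | f bs.
       length bs = ar f \<and> set bs \<subseteq> B}"

text \<open>A+X (resp. A+Y) is the algebra in the variety C presented by generators A \<uplus> X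
  (type 'a+'a) and the diagrams of A and X.  Elements of A+X+Y are represented by terms over
  generators 'a+'a+'a (the kernel condition and the image under [1,x,y] do not depend on
  the representative, so the congruence of A+X+Y itself need not be mentioned).\<close>
definition rel_AX :: "('f \<Rightarrow> nat) \<Rightarrow> ('f \<Rightarrow> 'a list \<Rightarrow> 'a) \<Rightarrow> 'a set \<Rightarrow> 'a set
     \<Rightarrow> (('f, 'a + 'a) trm \<times> ('f, 'a + 'a) trm) set" where
  "rel_AX ar F C X = diagram ar F C Inl \<union> diagram ar F X Inr"

text \<open>Generator-level description of [\<iota>1,\<iota>2,0] : A+X+Y \<rightarrow> A+X and [\<iota>1,0,\<iota>2] : A+X+Y \<rightarrow> A+Y.\<close>
definition map_AX0 :: "'f \<Rightarrow> 'a + 'a + 'a \<Rightarrow> ('f, 'a + 'a) trm" where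
  "map_AX0 z v = (case v of Inl a \<Rightarrow> Var (Inl a) | Inr (Inl x) \<Rightarrow> Var (Inr x) | Inr (Inr y) \<Rightarrow> App z [])"

definition map_A0Y :: "'f \<Rightarrow> 'a + 'a + 'a \<Rightarrow> ('f, 'a + 'a) trm" where
  "map_A0Y z v = (case v of Inl a \<Rightarrow> Var (Inl a) | Inr (Inl x) \<Rightarrow> App z [] | Inr (Inr y) \<Rightarrow> Var (Inr y))"

text \<open>Generator-level description of [1_A, x, y] : A+X+Y \<rightarrow> A.\<close>
definition fold3 :: "'a + 'a + 'a \<Rightarrow> 'a" where
  "fold3 v = (case v of Inl a \<Rightarrow> a | Inr (Inl x) \<Rightarrow> x | Inr (Inr y) \<Rightarrow> y)"

definition valid_gen3 :: "'a set \<Rightarrow> 'a set \<Rightarrow> 'a set \<Rightarrow> 'a + 'a + 'a \<Rightarrow> bool" where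
  "valid_gen3 C X Y v = (case v of Inl a \<Rightarrow> a \<in> C | Inr (Inl x) \<Rightarrow> x \<in> X | Inr (Inr y) \<Rightarrow> y \<in> Y)"

text \<open>[X,Y]_{A|1}: image under [1_A,x,y] of the kernel of
  \<langle>[\<iota>1,\<iota>2,0],[\<iota>1,0,\<iota>2]\<rangle> : A+X+Y \<rightarrow> (A+X)\<times>_A(A+Y).  An element of A+X+Y is the class
  of a term t over the generators; it lies in the kernel iff its images in A+X and A+Y
  are both 0.\<close>
definition comm_A1 ::
  "('f \<Rightarrow> nat) \<Rightarrow> (('f, nat) trm \<times> ('f, nat) trm) set \<Rightarrow> 'f \<Rightarrow> 'a set \<Rightarrow> ('f \<Rightarrow> 'a list \<Rightarrow> 'a)
     \<Rightarrow> 'a set \<Rightarrow> 'a set \<Rightarrow> 'a set" where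
  "comm_A1 ar E z C F X Y =
     {eval F fold3 t | t. wf_trm ar t \<and> (\<forall>v \<in> vars t. valid_gen3 C X Y v) \<and>
        deriv ar E (rel_AX ar F C X) (subst (map_AX0 z) t) (App z []) \<and>
        deriv ar E (rel_AX ar F C Y) (subst (map_A0Y z) t) (App z [])}"

text \<open>The free algebra in the variety C on the set S: classes of terms over S modulo the identities of the variety C.\<close>
definition tcls :: "('f \<Rightarrow> nat) \<Rightarrow> (('f, nat) trm \<times> ('f, nat) trm) set \<Rightarrow> ('f, 's) trm \<Rightarrow> ('f, 's) trm set" where
  "tcls ar E t = {s. deriv ar E {} t s}"

definition free_carrier :: "('f \<Rightarrow> nat) \<Rightarrow> (('f, nat) trm \<times> ('f, nat) trm) set \<Rightarrow> 's set \<Rightarrow> ('f, 's) trm set set" where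
  "free_carrier ar E S = tcls ar E ` {t. wf_trm ar t \<and> vars t \<subseteq> S}"

definition free_ops :: "('f \<Rightarrow> nat) \<Rightarrow> (('f, nat) trm \<times> ('f, nat) trm) set
     \<Rightarrow> 'f \<Rightarrow> ('f, 's) trm set list \<Rightarrow> ('f, 's) trm set" where
  "free_ops ar E f cs = tcls ar E (App f (map (\<lambda>c. SOME t. wf_trm ar t \<and> c = tcls ar E t) cs))"

definition free_gen :: "('f \<Rightarrow> nat) \<Rightarrow> (('f, nat) trm \<times> ('f, nat) trm) set \<Rightarrow> 's \<Rightarrow> ('f, 's) trm set" where
  "free_gen ar E s = tcls ar E (Var s)"

end

theory Submission imports Defs begin

lemma subst_subst: "subst \<sigma> (subst \<tau> t) = subst (\<lambda>v. subst \<sigma> (\<tau> v)) t"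
  by (induction t) auto

lemma eval_subst: "eval F \<beta> (subst \<sigma> t) = eval F (\<lambda>v. eval F \<beta> (\<sigma> v)) t"
proof (induction t)
  case (App f ts)
  then show ?case by (auto intro!: arg_cong[where f="F f"])
qed simp

lemma vars_subst: "vars (subst \<sigma> t) = (\<Union>v\<in>vars t. vars (\<sigma> v))"
  by (induction t) auto

lemma finite_vars: "finite (vars t)"
  by (induction t) auto

lemma wf_subst: "wf_trm ar t \<Longrightarrow> (\<forall>v\<in>vars t. wf_trm ar (\<sigma> v)) \<Longrightarrow> wf_trm ar (subst \<sigma> t)"
  by (induction t) (auto simp: list_all_iff)

lemma subst_cong: "(\<forall>v\<in>vars t. \<sigma> v = \<sigma>' v) \<Longrightarrow> subst \<sigma> t = subst \<sigma>' t"
  by (induction t) auto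

lemma eval_cong: "(\<forall>v\<in>vars t. \<alpha> v = \<alpha>' v) \<Longrightarrow> eval F \<alpha> t = eval F \<alpha>' t"
proof (induction t)
  case (App f ts)
  then show ?case by (auto intro!: arg_cong[where f="F f"])
qed simp

lemma list_all2_mapI: "(\<forall>x\<in>set xs. P (f x) (g x)) \<Longrightarrow> list_all2 P (map f xs) (map g xs)"
  by (induction xs) auto

lemma deriv_subst:
  assumes "deriv ar E R s t" "\<forall>v. wf_trm ar (\<theta> v)"
    "\<forall>(l, r)\<in>R. deriv ar E R' (subst \<theta> l) (subst \<theta> r)"
  shows "deriv ar E R' (subst \<theta> s) (subst \<theta> t)"
  using assms(1)
proof (induction rule: deriv.induct)
  case (refl t)
  then show ?case using assms(2) by (intro deriv.refl wf_subst) auto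
next
  case (sym s t)
  then show ?case by (simp add: deriv.sym)
next
  case (trans s t u)
  then show ?case by (metis deriv.trans)
next
  case (ax l r \<sigma>)
  have "deriv ar E R' (subst (\<lambda>v. subst \<theta> (\<sigma> v)) l) (subst (\<lambda>v. subst \<theta> (\<sigma> v)) r)"
    using ax assms(2) by (intro deriv.ax) (auto intro: wf_subst)
  then show ?case by (simp add: subst_subst)
next
  case (rel s t)
  then show ?case using assms(3) by auto
next
  case (cong ss f ts)
  have "list_all2 (deriv ar E R') (map (subst \<theta>) ss) (map (subst \<theta>) ts)"
    using cong(2) by (auto simp: list_all2_map1 list_all2_map2 elim: list_all2_mono)
  then show ?case using cong(1) by (simp add: deriv.cong)
qed

lemma deriv_subst_cong:
  "wf_trm ar t \<Longrightarrow> (\<forall>v\<in>vars t. deriv ar E R (\<sigma> v) (\<sigma>' v)) \<Longrightarrow> deriv ar E R (subst \<sigma> t) (subst \<sigma>' t)"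
proof (induction t)
  case (Var x)
  then show ?case by simp
next
  case (App f ts)
  have "list_all2 (deriv ar E R) (map (subst \<sigma>) ts) (map (subst \<sigma>') ts)"
    using App by (intro list_all2_mapI) (auto simp: list_all_iff)
  then show ?case using App.prems by (simp add: deriv.cong)
qed


lemma zero_subst:
  fixes ar :: "'f \<Rightarrow> nat" and R :: "(('f, 'v) trm \<times> ('f, 'v) trm) set"
  assumes pointed: "pointed_variety ar E z" and "wf_trm ar u"
  shows "deriv ar E R (subst (\<lambda>_. App z []) u) (App z [])"
  using assms(2)
proof (induction u)
  case (Var x)
  have "ar z = 0" using pointed by (simp add: pointed_variety_def)
  then have "wf_trm ar (App z [])" by simp
  then show ?case by (simp add: deriv.refl)
next
  case (App f ts)
  have z0: "ar z = 0" using pointed by (simp add: pointed_variety_def)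
  have "list_all2 (deriv ar E R) (map (subst (\<lambda>_. App z [])) ts) (map (\<lambda>_. App z []) ts)"
    using App by (intro list_all2_mapI) (auto simp: list_all_iff)
  moreover have "map (\<lambda>_. App z []) ts = replicate (ar f) (App z [])"
    using App.prems by (simp add: map_replicate_const)
  ultimately have L: "list_all2 (deriv ar E R) (map (subst (\<lambda>_. App z [])) ts) (replicate (ar f) (App z []))"
    by metis
  have 1: "deriv ar E R (App f (map (subst (\<lambda>_. App z [])) ts)) (App f (replicate (ar f) (App z [])))"
    using App.prems by (intro deriv.cong[OF _ L]) auto
  have "deriv ar E ({} :: (('f, nat) trm \<times> ('f, nat) trm) set) (App f (replicate (ar f) (App z []))) (App z [])"
    using pointed by (simp add: pointed_variety_def)
  from deriv_subst[OF this, where \<theta>="\<lambda>_. App z []" and R'=R]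
  have "deriv ar E R (subst (\<lambda>_. App z []) (App f (replicate (ar f) (App z [])))) (subst (\<lambda>_. App z []) (App z []))"
    using z0 by auto
  then have "deriv ar E R (App f (replicate (ar f) (App z []))) (App z [])"
    by (simp add: map_replicate_const)
  with 1 show ?case by (simp add: deriv.trans)
qed

lemma part_a:
  fixes C :: "'a set" and F :: "'f \<Rightarrow> 'a list \<Rightarrow> 'a"
  assumes pointed: "pointed_variety ar E z"
  shows "comm_CA ar E z C F X Y \<subseteq> comm_A1 ar E z C F X Y"
proof
  fix c assume "c \<in> comm_CA ar E z C F X Y"
  then obtain t \<alpha> where c: "c = eval F \<alpha> t" and ct: "commutator_term ar E z t"
    and \<alpha>: "\<forall>i. \<alpha> (Inl i) \<in> C \<and> \<alpha> (Inr (Inl i)) \<in> X \<and> \<alpha> (Inr (Inr i)) \<in> Y"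
    unfolding comm_CA_def by blast
  have z0: "ar z = 0" using pointed by (simp add: pointed_variety_def)
  define g :: "var3 \<Rightarrow> 'a + 'a + 'a" where
    "g v = (case v of Inl i \<Rightarrow> Inl (\<alpha> v) | Inr (Inl i) \<Rightarrow> Inr (Inl (\<alpha> v)) | Inr (Inr i) \<Rightarrow> Inr (Inr (\<alpha> v)))" for v
  define t0 where "t0 = subst (\<lambda>v. Var (g v)) t"
  have wft: "wf_trm ar t" using ct by (simp add: commutator_term_def)
  have wf0: "wf_trm ar t0" unfolding t0_def using wft by (intro wf_subst) auto
  have fold: "fold3 (g v) = \<alpha> v" for v by (auto simp: g_def fold3_def split: sum.splits)
  have ev: "eval F fold3 t0 = c" unfolding t0_def c by (simp add: eval_subst fold)
  have valid: "\<forall>v\<in>vars t0. valid_gen3 C X Y v"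
    unfolding t0_def vars_subst using \<alpha> by (auto simp: g_def valid_gen3_def split: sum.splits)
  define \<theta>1 where "\<theta>1 v = map_AX0 z (g v)" for v
  define \<theta>2 where "\<theta>2 v = map_A0Y z (g v)" for v
  have wf\<theta>1: "\<forall>v. wf_trm ar (\<theta>1 v)" using z0 by (auto simp: \<theta>1_def map_AX0_def split: sum.splits)
  have wf\<theta>2: "\<forall>v. wf_trm ar (\<theta>2 v)" using z0 by (auto simp: \<theta>2_def map_A0Y_def split: sum.splits)
  have e1: "subst (map_AX0 z) t0 = subst \<theta>1 (subst (\<lambda>v. kill_y v z) t)"
    unfolding t0_def subst_subst
    by (rule subst_cong) (auto simp: \<theta>1_def kill_y_def map_AX0_def g_def split: sum.splits)
  have e2: "subst (map_A0Y z) t0 = subst \<theta>2 (subst (\<lambda>v. kill_x v z) t)"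
    unfolding t0_def subst_subst
    by (rule subst_cong) (auto simp: \<theta>2_def kill_x_def map_A0Y_def g_def split: sum.splits)
  have d1: "deriv ar E (rel_AX ar F C X) (subst (map_AX0 z) t0) (App z [])"
    unfolding e1 using deriv_subst[OF conjunct2[OF conjunct2[OF ct[unfolded commutator_term_def]]] wf\<theta>1]
    by simp
  have d2: "deriv ar E (rel_AX ar F C Y) (subst (map_A0Y z) t0) (App z [])"
    unfolding e2 using deriv_subst[OF conjunct1[OF conjunct2[OF ct[unfolded commutator_term_def]]] wf\<theta>2]
    by simp
  show "c \<in> comm_A1 ar E z C F X Y"
    unfolding comm_A1_def using wf0 valid d1 d2 ev by blast
qed


definition fcar :: "('f \<Rightarrow> nat) \<Rightarrow> (('f, nat) trm \<times> ('f, nat) trm) set \<Rightarrow> 's set \<Rightarrow> ('f, 's) trm set set" where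
  "fcar ar E P = tcls ar E ` {t. wf_trm ar t \<and> vars t \<subseteq> P}"

definition rep :: "('f \<Rightarrow> nat) \<Rightarrow> (('f, nat) trm \<times> ('f, nat) trm) set \<Rightarrow> 's set \<Rightarrow> ('f, 's) trm set \<Rightarrow> ('f, 's) trm" where
  "rep ar E P a = (SOME u. wf_trm ar u \<and> vars u \<subseteq> P \<and> a = tcls ar E u)"

lemma rep_spec: "a \<in> fcar ar E P \<Longrightarrow> wf_trm ar (rep ar E P a) \<and> vars (rep ar E P a) \<subseteq> P \<and> a = tcls ar E (rep ar E P a)"
  unfolding fcar_def rep_def by (rule someI_ex) blast

lemma tcls_eqD: "wf_trm ar t \<Longrightarrow> tcls ar E s = tcls ar E t \<Longrightarrow> deriv ar E {} s t"
  unfolding tcls_def by (metis (mono_tags) deriv.refl mem_Collect_eq)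

lemma tcls_eqI: "deriv ar E {} s t \<Longrightarrow> tcls ar E s = tcls ar E t"
  unfolding tcls_def by (auto intro: deriv.sym deriv.trans)

lemma free_ops_eq:
  fixes us :: "('f, 's) trm list"
  assumes "length us = ar f" "list_all (wf_trm ar) us"
  shows "free_ops ar E f (map (tcls ar E) us) = tcls ar E (App f us)"
proof -
  define ch :: "('f, 's) trm set \<Rightarrow> ('f, 's) trm" where "ch c = (SOME t. wf_trm ar t \<and> c = tcls ar E t)" for c
  have ch: "wf_trm ar (ch (tcls ar E u)) \<and> tcls ar E u = tcls ar E (ch (tcls ar E u))" if "wf_trm ar u" for u
    unfolding ch_def by (rule someI_ex) (use that in blast)
  have "list_all2 (deriv ar E {}) (map (\<lambda>u. ch (tcls ar E u)) us) us"
  proof -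
    have D: "deriv ar E {} (ch (tcls ar E u)) u" if "wf_trm ar u" for u
      using ch[OF that] tcls_eqD[OF that, of E "ch (tcls ar E u)"] by simp
    show ?thesis using assms(2) D
      by (auto simp: list_all_iff list_all2_conv_all_nth)
  qed
  then have "deriv ar E {} (App f (map (\<lambda>u. ch (tcls ar E u)) us)) (App f us)"
    using assms(1) by (intro deriv.cong) auto
  then show ?thesis unfolding free_ops_def ch_def[symmetric]
    by (simp add: o_def tcls_eqI)
qed

lemma eval_free: "wf_trm ar u \<Longrightarrow> eval (free_ops ar E) (\<lambda>s. tcls ar E (Var s)) u = tcls ar E u"
proof (induction u)
  case (App f ts)
  then have M: "map (eval (free_ops ar E) (\<lambda>s. tcls ar E (Var s))) ts = map (tcls ar E) ts"
    by (auto simp: list_all_iff)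
  show ?case using App.prems free_ops_eq[of ts ar f E] by (simp only: eval.simps M) simp
qed simp

lemma fcar_closed: "closed_under ar (free_ops ar E) (fcar ar E P)"
  unfolding closed_under_def
proof (intro allI impI)
  fix f as assume a: "length as = ar f \<and> set as \<subseteq> fcar ar E P"
  define us where "us = map (rep ar E P) as"
  have sp: "\<forall>a\<in>set as. wf_trm ar (rep ar E P a) \<and> vars (rep ar E P a) \<subseteq> P \<and> a = tcls ar E (rep ar E P a)"
    using a rep_spec by blast
  have as: "as = map (tcls ar E) us" unfolding us_def using sp by (simp add: map_idI)
  have "free_ops ar E f as = tcls ar E (App f us)"
    unfolding as using a sp by (intro free_ops_eq) (auto simp: us_def list_all_iff)
  moreover have "wf_trm ar (App f us) \<and> vars (App f us) \<subseteq> P"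
    using a sp by (auto simp: us_def list_all_iff)
  ultimately show "free_ops ar E f as \<in> fcar ar E P" unfolding fcar_def by blast
qed

lemma fcar_mono: "P \<subseteq> S \<Longrightarrow> fcar ar E P \<subseteq> fcar ar E S"
  unfolding fcar_def by blast

lemma gen_in_fcar: "s \<in> P \<Longrightarrow> free_gen ar E s \<in> fcar ar E P"
  unfolding fcar_def free_gen_def by force

lemma generated_sub:
  assumes "B \<subseteq> C" "G \<subseteq> B" "closed_under ar F B"
  shows "generated ar F C G \<subseteq> B"
  using assms unfolding generated_def by blast

lemma generated_props:
  assumes "G \<subseteq> C" "closed_under ar F C"
  shows "subalgebra ar F C (generated ar F C G)" "G \<subseteq> generated ar F C G"
  using assms unfolding generated_def subalgebra_def closed_under_def by blast+

lemma diag_ok: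
  assumes B: "B \<subseteq> fcar ar E P" "closed_under ar (free_ops ar E) B"
    and bs: "length bs = ar f" "set bs \<subseteq> B"
  shows "deriv ar E {} (App f (map (rep ar E P) bs)) (rep ar E P (free_ops ar E f bs))"
proof -
  have sp: "\<forall>a\<in>set bs. wf_trm ar (rep ar E P a) \<and> a = tcls ar E (rep ar E P a)"
    using bs B rep_spec by blast
  have as: "bs = map (tcls ar E) (map (rep ar E P) bs)" using sp by (simp add: map_idI)
  have eq: "free_ops ar E f bs = tcls ar E (App f (map (rep ar E P) bs))"
    by (subst as) (rule free_ops_eq, use bs sp in \<open>auto simp: list_all_iff\<close>)
  have "free_ops ar E f bs \<in> B" using B bs unfolding closed_under_def by blast
  then have sp2: "wf_trm ar (rep ar E P (free_ops ar E f bs)) \<and> free_ops ar E f bs = tcls ar E (rep ar E P (free_ops ar E f bs))"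
    using B rep_spec by blast
  show ?thesis using tcls_eqD sp2 eq by metis
qed


definition rp :: "('f \<Rightarrow> nat) \<Rightarrow> (('f, nat) trm \<times> ('f, nat) trm) set \<Rightarrow> 'f \<Rightarrow> 's set \<Rightarrow> ('f, 's) trm set \<Rightarrow> ('f, 's) trm" where
  "rp ar E z P a = (if a \<in> fcar ar E P then rep ar E P a else App z [])"

lemma rp_wf: "ar z = 0 \<Longrightarrow> wf_trm ar (rp ar E z P a)"
  unfolding rp_def using rep_spec by auto

lemma rp_spec: "a \<in> fcar ar E P \<Longrightarrow> wf_trm ar (rp ar E z P a) \<and> vars (rp ar E z P a) \<subseteq> P \<and> a = tcls ar E (rp ar E z P a)"
  unfolding rp_def using rep_spec[of a ar E P] by simp

lemma eval_back: "wf_trm ar u \<Longrightarrow> (\<forall>s\<in>vars u. \<beta> s = tcls ar E (Var s)) \<Longrightarrow> eval (free_ops ar E) \<beta> u = tcls ar E u"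
  using eval_cong[of u \<beta> "\<lambda>s. tcls ar E (Var s)"] eval_free by metis

lemma diag_ren:
  assumes B: "B \<subseteq> fcar ar E P" "closed_under ar (free_ops ar E) B"
    and lr: "(l, r) \<in> diagram ar (free_ops ar E) B g"
    and th: "\<forall>b\<in>B. \<theta> (g b) = subst ren (rp ar E z P b)"
    and wr: "\<forall>v. wf_trm ar (ren v)"
  shows "deriv ar E {} (subst \<theta> l) (subst \<theta> r)"
proof -
  obtain f bs where l: "l = App f (map (\<lambda>b. Var (g b)) bs)" and r: "r = Var (g (free_ops ar E f bs))"
    and bs: "length bs = ar f" "set bs \<subseteq> B"
    using lr unfolding diagram_def by blast
  have FB: "free_ops ar E f bs \<in> B" using B bs unfolding closed_under_def by blast
  have rr: "rp ar E z P b = rep ar E P b" if "b \<in> B" for b using that B unfolding rp_def by auto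
  have "subst \<theta> l = subst ren (App f (map (rep ar E P) bs))"
    unfolding l using th bs rr by auto
  moreover have "subst \<theta> r = subst ren (rep ar E P (free_ops ar E f bs))"
    unfolding r using th FB rr by auto
  moreover have "deriv ar E {} (subst ren (App f (map (rep ar E P) bs))) (subst ren (rep ar E P (free_ops ar E f bs)))"
    by (rule deriv_subst[OF diag_ok[OF B bs] wr]) auto
  ultimately show ?thesis by simp
qed


lemma part_b:
  fixes S :: "'s set" and ar :: "'f \<Rightarrow> nat"
  assumes pointed: "pointed_variety ar E z" and PS: "P \<subseteq> S" and QS: "Q \<subseteq> S"
  defines "A \<equiv> free_carrier ar E S" and "F \<equiv> free_ops ar E"
    and "X \<equiv> generated ar (free_ops ar E) (free_carrier ar E S) (free_gen ar E ` P)"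
    and "Y \<equiv> generated ar (free_ops ar E) (free_carrier ar E S) (free_gen ar E ` Q)"
  shows "comm_A1 ar E z A F X Y \<subseteq> comm_CA ar E z A F X Y"
proof
  have z0: "ar z = 0" using pointed by (simp add: pointed_variety_def)
  have A: "A = fcar ar E S" unfolding A_def free_carrier_def fcar_def by simp
  have closedA: "closed_under ar F A" unfolding A F_def by (rule fcar_closed)
  have GP: "free_gen ar E ` P \<subseteq> A" unfolding A using PS by (auto intro: gen_in_fcar)
  have GQ: "free_gen ar E ` Q \<subseteq> A" unfolding A using QS by (auto intro: gen_in_fcar)
  have subX: "subalgebra ar F A X" and genX: "free_gen ar E ` P \<subseteq> X"
    unfolding X_def A_def[symmetric] F_def[symmetric] using generated_props[OF GP closedA] by auto
  have subY: "subalgebra ar F A Y" and genY: "free_gen ar E ` Q \<subseteq> Y"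
    unfolding Y_def A_def[symmetric] F_def[symmetric] using generated_props[OF GQ closedA] by auto
  have XP: "X \<subseteq> fcar ar E P"
    unfolding X_def A_def[symmetric]
  proof (rule generated_sub)
    show "fcar ar E P \<subseteq> A" using fcar_mono[OF PS] A by simp
    show "free_gen ar E ` P \<subseteq> fcar ar E P" by (auto intro: gen_in_fcar)
    show "closed_under ar (free_ops ar E) (fcar ar E P)" by (rule fcar_closed)
  qed
  have YQ: "Y \<subseteq> fcar ar E Q"
    unfolding Y_def A_def[symmetric]
  proof (rule generated_sub)
    show "fcar ar E Q \<subseteq> A" using fcar_mono[OF QS] A by simp
    show "free_gen ar E ` Q \<subseteq> fcar ar E Q" by (auto intro: gen_in_fcar)
    show "closed_under ar (free_ops ar E) (fcar ar E Q)" by (rule fcar_closed)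
  qed
  have clX: "closed_under ar F X" and clY: "closed_under ar F Y"
    using subX subY by (auto simp: subalgebra_def)
  have zA: "F z [] \<in> A" using closedA z0 unfolding closed_under_def by auto
  have zX: "F z [] \<in> X" using clX z0 unfolding closed_under_def by auto
  have zY: "F z [] \<in> Y" using clY z0 unfolding closed_under_def by auto

  fix c assume "c \<in> comm_A1 ar E z A F X Y"
  then obtain t where c: "c = eval F fold3 t" and wft: "wf_trm ar t"
    and valid: "\<forall>v \<in> vars t. valid_gen3 A X Y v"
    and d1: "deriv ar E (rel_AX ar F A X) (subst (map_AX0 z) t) (App z [])"
    and d2: "deriv ar E (rel_AX ar F A Y) (subst (map_A0Y z) t) (App z [])"
    unfolding comm_A1_def by blast

  define rW :: "'s \<Rightarrow> ('f, 's + 's + 's) trm" where "rW s = Var (Inl s)" for s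
  define rX :: "'s \<Rightarrow> ('f, 's + 's + 's) trm" where "rX s = Var (Inr (Inl s))" for s
  define rY :: "'s \<Rightarrow> ('f, 's + 's + 's) trm" where "rY s = Var (Inr (Inr s))" for s
  define \<tau> where "\<tau> g = (case g of Inl a \<Rightarrow> subst rW (rp ar E z S a)
      | Inr (Inl x) \<Rightarrow> subst rX (rp ar E z P x) | Inr (Inr y) \<Rightarrow> subst rY (rp ar E z Q y))" for g
  define t1 where "t1 = subst \<tau> t"
  have wf\<tau>: "wf_trm ar (\<tau> g)" for g
    unfolding \<tau>_def using rp_wf[of ar z, OF z0]
    by (auto simp: rW_def[abs_def] rX_def[abs_def] rY_def[abs_def] intro!: wf_subst split: sum.splits)
  have wft1: "wf_trm ar t1" unfolding t1_def using wft wf\<tau> by (intro wf_subst) auto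

  define ky :: "'s + 's + 's \<Rightarrow> ('f, 's + 's + 's) trm" where
    "ky v = (case v of Inr (Inr _) \<Rightarrow> App z [] | _ \<Rightarrow> Var v)" for v
  define kx :: "'s + 's + 's \<Rightarrow> ('f, 's + 's + 's) trm" where
    "kx v = (case v of Inr (Inl _) \<Rightarrow> App z [] | _ \<Rightarrow> Var v)" for v

  have Ky: "deriv ar E {} (subst ky t1) (App z [])"
  proof -
    define \<theta> :: "('f, 's) trm set + ('f, 's) trm set \<Rightarrow> ('f, 's + 's + 's) trm" where
      "\<theta> g = (case g of Inl a \<Rightarrow> subst rW (rp ar E z S a) | Inr x \<Rightarrow> subst rX (rp ar E z P x))" for g
    have wf\<theta>: "\<forall>v. wf_trm ar (\<theta> v)"
      unfolding \<theta>_def using rp_wf[of ar z, OF z0]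
      by (auto simp: rW_def[abs_def] rX_def[abs_def] intro!: wf_subst split: sum.splits)
    have rel: "\<forall>(l, r)\<in>rel_AX ar F A X. deriv ar E {} (subst \<theta> l) (subst \<theta> r)"
    proof (clarify)
      fix l r assume "(l, r) \<in> rel_AX ar F A X"
      then consider "(l, r) \<in> diagram ar F A Inl" | "(l, r) \<in> diagram ar F X Inr"
        unfolding rel_AX_def by blast
      then show "deriv ar E {} (subst \<theta> l) (subst \<theta> r)"
      proof cases
        case 1
        show ?thesis
          by (rule diag_ren[where B=A and P=S and g=Inl and ren=rW])
            (use 1 A closedA in \<open>auto simp: F_def \<theta>_def rW_def\<close>)
      next
        case 2
        show ?thesis
          by (rule diag_ren[where B=X and P=P and g=Inr and ren=rX])
            (use 2 XP clX in \<open>auto simp: F_def \<theta>_def rX_def\<close>)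
      qed
    qed
    have i: "deriv ar E {} (subst \<theta> (subst (map_AX0 z) t)) (App z [])"
      using deriv_subst[OF d1 wf\<theta> rel] by simp
    have ii: "deriv ar E {} (subst ky t1) (subst \<theta> (subst (map_AX0 z) t))"
      unfolding t1_def subst_subst
    proof (rule deriv_subst_cong[OF wft], intro ballI)
      fix g assume "g \<in> vars t"
      have R: "deriv ar E {} (subst ky (\<tau> g)) (subst ky (\<tau> g))"
        by (rule deriv.refl, rule wf_subst) (use wf\<tau> z0 in \<open>auto simp: ky_def split: sum.splits\<close>)
      show "deriv ar E {} (subst ky (\<tau> g)) (subst \<theta> (map_AX0 z g))"
      proof (cases g)
        case (Inl a)
        have "subst ky (\<tau> g) = subst \<theta> (map_AX0 z g)"
          by (simp add: Inl \<tau>_def \<theta>_def map_AX0_def subst_subst rW_def[abs_def] ky_def)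
        then show ?thesis using R by simp
      next
        case (Inr h)
        show ?thesis
        proof (cases h)
          case (Inl x)
          have "subst ky (\<tau> g) = subst \<theta> (map_AX0 z g)"
            by (simp add: Inr Inl \<tau>_def \<theta>_def map_AX0_def subst_subst rX_def[abs_def] ky_def)
          then show ?thesis using R by simp
        next
          case (Inr y)
          have "subst ky (\<tau> g) = subst (\<lambda>_. App z []) (rp ar E z Q y)"
            by (simp add: \<open>g = Inr h\<close> Inr \<tau>_def subst_subst rY_def[abs_def] ky_def)
          moreover have "subst \<theta> (map_AX0 z g) = App z []"
            by (simp add: \<open>g = Inr h\<close> Inr map_AX0_def)
          ultimately show ?thesis using zero_subst[OF pointed rp_wf[of ar z, OF z0]] by simp
        qed
      qed
    qed
    show ?thesis using deriv.trans[OF ii i] .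
  qed
  have Kx: "deriv ar E {} (subst kx t1) (App z [])"
  proof -
    define \<theta> :: "('f, 's) trm set + ('f, 's) trm set \<Rightarrow> ('f, 's + 's + 's) trm" where
      "\<theta> g = (case g of Inl a \<Rightarrow> subst rW (rp ar E z S a) | Inr x \<Rightarrow> subst rY (rp ar E z Q x))" for g
    have wf\<theta>: "\<forall>v. wf_trm ar (\<theta> v)"
      unfolding \<theta>_def using rp_wf[of ar z, OF z0]
      by (auto simp: rW_def[abs_def] rY_def[abs_def] intro!: wf_subst split: sum.splits)
    have rel: "\<forall>(l, r)\<in>rel_AX ar F A Y. deriv ar E {} (subst \<theta> l) (subst \<theta> r)"
    proof (clarify)
      fix l r assume "(l, r) \<in> rel_AX ar F A Y"
      then consider "(l, r) \<in> diagram ar F A Inl" | "(l, r) \<in> diagram ar F Y Inr"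
        unfolding rel_AX_def by blast
      then show "deriv ar E {} (subst \<theta> l) (subst \<theta> r)"
      proof cases
        case 1
        show ?thesis
          by (rule diag_ren[where B=A and P=S and g=Inl and ren=rW])
            (use 1 A closedA in \<open>auto simp: F_def \<theta>_def rW_def\<close>)
      next
        case 2
        show ?thesis
          by (rule diag_ren[where B=Y and P=Q and g=Inr and ren=rY])
            (use 2 YQ clY in \<open>auto simp: F_def \<theta>_def rY_def\<close>)
      qed
    qed
    have i: "deriv ar E {} (subst \<theta> (subst (map_A0Y z) t)) (App z [])"
      using deriv_subst[OF d2 wf\<theta> rel] by simp
    have ii: "deriv ar E {} (subst kx t1) (subst \<theta> (subst (map_A0Y z) t))"
      unfolding t1_def subst_subst
    proof (rule deriv_subst_cong[OF wft], intro ballI)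
      fix g assume "g \<in> vars t"
      have R: "deriv ar E {} (subst kx (\<tau> g)) (subst kx (\<tau> g))"
        by (rule deriv.refl, rule wf_subst) (use wf\<tau> z0 in \<open>auto simp: kx_def split: sum.splits\<close>)
      show "deriv ar E {} (subst kx (\<tau> g)) (subst \<theta> (map_A0Y z g))"
      proof (cases g)
        case (Inl a)
        have "subst kx (\<tau> g) = subst \<theta> (map_A0Y z g)"
          by (simp add: Inl \<tau>_def \<theta>_def map_A0Y_def subst_subst rW_def[abs_def] kx_def)
        then show ?thesis using R by simp
      next
        case (Inr h)
        show ?thesis
        proof (cases h)
          case (Inl x)
          have "subst kx (\<tau> g) = subst (\<lambda>_. App z []) (rp ar E z P x)"
            by (simp add: \<open>g = Inr h\<close> Inl \<tau>_def subst_subst rX_def[abs_def] kx_def)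
          moreover have "subst \<theta> (map_A0Y z g) = App z []"
            by (simp add: \<open>g = Inr h\<close> Inl map_A0Y_def)
          ultimately show ?thesis using zero_subst[OF pointed rp_wf[of ar z, OF z0]] by simp
        next
          case (Inr y)
          have "subst kx (\<tau> g) = subst \<theta> (map_A0Y z g)"
            by (simp add: \<open>g = Inr h\<close> Inr \<tau>_def \<theta>_def map_A0Y_def subst_subst rY_def[abs_def] kx_def)
          then show ?thesis using R by simp
        qed
      qed
    qed
    show ?thesis using deriv.trans[OF ii i] .
  qed

  define pr :: "'s + 's + 's \<Rightarrow> 's" where
    "pr v = (case v of Inl s \<Rightarrow> s | Inr (Inl s) \<Rightarrow> s | Inr (Inr s) \<Rightarrow> s)" for v
  define V where "V = pr ` vars t1"
  have finV: "finite V" unfolding V_def by (simp add: finite_vars)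
  obtain e :: "'s \<Rightarrow> nat" where inje: "inj_on e V"
    using finite_imp_inj_to_nat_seg[OF finV] by blast
  define m where "m = map_sum e (map_sum e e)"
  define enc :: "'s + 's + 's \<Rightarrow> ('f, var3) trm" where "enc v = Var (m v)" for v
  define t' where "t' = subst enc t1"
  define d where "d = inv_into V e"
  define \<alpha> :: "var3 \<Rightarrow> ('f, 's) trm set" where
    "\<alpha> v = (case v of Inl i \<Rightarrow> (if d i \<in> S then free_gen ar E (d i) else F z [])
       | Inr (Inl i) \<Rightarrow> (if d i \<in> P then free_gen ar E (d i) else F z [])
       | Inr (Inr i) \<Rightarrow> (if d i \<in> Q then free_gen ar E (d i) else F z []))" for v
  have \<alpha>ok: "\<forall>i. \<alpha> (Inl i) \<in> A \<and> \<alpha> (Inr (Inl i)) \<in> X \<and> \<alpha> (Inr (Inr i)) \<in> Y"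
  proof
    fix i
    have 1: "\<alpha> (Inl i) \<in> A"
    proof (cases "d i \<in> S")
      case True then show ?thesis using GP unfolding \<alpha>_def A by (simp add: gen_in_fcar)
    qed (use zA in \<open>simp add: \<alpha>_def\<close>)
    have 2: "\<alpha> (Inr (Inl i)) \<in> X"
    proof (cases "d i \<in> P")
      case True then show ?thesis using genX unfolding \<alpha>_def by auto
    qed (use zX in \<open>simp add: \<alpha>_def\<close>)
    have 3: "\<alpha> (Inr (Inr i)) \<in> Y"
    proof (cases "d i \<in> Q")
      case True then show ?thesis using genY unfolding \<alpha>_def by auto
    qed (use zY in \<open>simp add: \<alpha>_def\<close>)
    show "\<alpha> (Inl i) \<in> A \<and> \<alpha> (Inr (Inl i)) \<in> X \<and> \<alpha> (Inr (Inr i)) \<in> Y" using 1 2 3 by blast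
  qed
  have wfenc: "\<forall>v. wf_trm ar (enc v)" by (simp add: enc_def)
  have wft': "wf_trm ar t'" unfolding t'_def using wft1 wfenc by (intro wf_subst) auto
  have cy: "deriv ar E {} (subst (\<lambda>v. kill_y v z) t') (App z [])"
  proof -
    have "subst (\<lambda>v. kill_y v z) t' = subst enc (subst ky t1)"
      unfolding t'_def subst_subst
      by (rule subst_cong) (auto simp: enc_def kill_y_def ky_def m_def split: sum.splits)
    then show ?thesis using deriv_subst[OF Ky wfenc, of "{}"] by simp
  qed
  have cx: "deriv ar E {} (subst (\<lambda>v. kill_x v z) t') (App z [])"
  proof -
    have "subst (\<lambda>v. kill_x v z) t' = subst enc (subst kx t1)"
      unfolding t'_def subst_subst
      by (rule subst_cong) (auto simp: enc_def kill_x_def kx_def m_def split: sum.splits)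
    then show ?thesis using deriv_subst[OF Kx wfenc, of "{}"] by simp
  qed
  have ct: "commutator_term ar E z t'"
    unfolding commutator_term_def using wft' cx cy by blast
  have dinv: "d (e s) = s" if "s \<in> V" for s
    unfolding d_def using inje that by (simp add: inv_into_f_f)
  have ev: "eval F \<alpha> t' = c"
  proof -
    have "eval F \<alpha> t' = eval F (\<lambda>g. eval F (\<lambda>v. \<alpha> (m v)) (\<tau> g)) t"
      unfolding t'_def t1_def by (simp add: eval_subst enc_def)
    also have "\<dots> = eval F fold3 t"
    proof (rule eval_cong, intro ballI)
      fix g assume g: "g \<in> vars t"
      have vt1: "vars (\<tau> g) \<subseteq> vars t1" unfolding t1_def vars_subst using g by blast
      have inV: "pr v \<in> V" if "v \<in> vars (\<tau> g)" for v using vt1 that V_def by blast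
      show "eval F (\<lambda>v. \<alpha> (m v)) (\<tau> g) = fold3 g"
      proof (cases g)
        case (Inl a)
        have "valid_gen3 A X Y g" using valid g by blast
        then have aA: "a \<in> fcar ar E S" using A by (simp add: valid_gen3_def Inl)
        note sp = rp_spec[OF aA, of z]
        have "eval F (\<lambda>v. \<alpha> (m v)) (\<tau> g) = eval F (\<lambda>s. \<alpha> (m (Inl s))) (rp ar E z S a)"
          by (simp add: Inl \<tau>_def eval_subst rW_def[abs_def])
        also have "\<dots> = tcls ar E (rp ar E z S a)"
          unfolding F_def
        proof (rule eval_back[OF conjunct1[OF sp]], intro ballI)
          fix s assume s: "s \<in> vars (rp ar E z S a)"
          have iv: "Inl s \<in> vars (\<tau> g)" using s by (simp add: Inl \<tau>_def vars_subst rW_def[abs_def])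
          have "s \<in> V" using inV[OF iv] by (simp add: pr_def)
          then show "\<alpha> (m (Inl s)) = tcls ar E (Var s)"
            using s sp dinv by (auto simp: \<alpha>_def m_def free_gen_def)
        qed
        finally show ?thesis using sp by (simp add: Inl fold3_def)
      next
        case (Inr h)
        show ?thesis
        proof (cases h)
          case (Inl x)
          have "valid_gen3 A X Y g" using valid g by blast
          then have xA: "x \<in> fcar ar E P" using XP by (auto simp: valid_gen3_def Inl \<open>g = Inr h\<close>)
          note sp = rp_spec[OF xA, of z]
          have "eval F (\<lambda>v. \<alpha> (m v)) (\<tau> g) = eval F (\<lambda>s. \<alpha> (m (Inr (Inl s)))) (rp ar E z P x)"
            by (simp add: \<open>g = Inr h\<close> Inl \<tau>_def eval_subst rX_def[abs_def])
          also have "\<dots> = tcls ar E (rp ar E z P x)"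
            unfolding F_def
          proof (rule eval_back[OF conjunct1[OF sp]], intro ballI)
            fix s assume s: "s \<in> vars (rp ar E z P x)"
            have iv: "Inr (Inl s) \<in> vars (\<tau> g)" using s by (simp add: \<open>g = Inr h\<close> Inl \<tau>_def vars_subst rX_def[abs_def])
            have "s \<in> V" using inV[OF iv] by (simp add: pr_def)
            then show "\<alpha> (m (Inr (Inl s))) = tcls ar E (Var s)"
              using s sp dinv by (auto simp: \<alpha>_def m_def free_gen_def)
          qed
          finally show ?thesis using sp by (simp add: \<open>g = Inr h\<close> Inl fold3_def)
        next
          case (Inr y)
          have "valid_gen3 A X Y g" using valid g by blast
          then have yA: "y \<in> fcar ar E Q" using YQ by (auto simp: valid_gen3_def Inr \<open>g = Inr h\<close>)
          note sp = rp_spec[OF yA, of z]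
          have "eval F (\<lambda>v. \<alpha> (m v)) (\<tau> g) = eval F (\<lambda>s. \<alpha> (m (Inr (Inr s)))) (rp ar E z Q y)"
            by (simp add: \<open>g = Inr h\<close> Inr \<tau>_def eval_subst rY_def[abs_def])
          also have "\<dots> = tcls ar E (rp ar E z Q y)"
            unfolding F_def
          proof (rule eval_back[OF conjunct1[OF sp]], intro ballI)
            fix s assume s: "s \<in> vars (rp ar E z Q y)"
            have iv: "Inr (Inr s) \<in> vars (\<tau> g)" using s by (simp add: \<open>g = Inr h\<close> Inr \<tau>_def vars_subst rY_def[abs_def])
            have "s \<in> V" using inV[OF iv] by (simp add: pr_def)
            then show "\<alpha> (m (Inr (Inr s))) = tcls ar E (Var s)"
              using s sp dinv by (auto simp: \<alpha>_def m_def free_gen_def)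
          qed
          finally show ?thesis using sp by (simp add: \<open>g = Inr h\<close> Inr fold3_def)
        qed
      qed
    qed
    finally show ?thesis using c by simp
  qed
  show "c \<in> comm_CA ar E z A F X Y"
    unfolding comm_CA_def using ct \<alpha>ok ev by blast
qed

theorem proposition7p5:
  fixes ar :: "'f \<Rightarrow> nat"
    and E :: "(('f, nat) trm \<times> ('f, nat) trm) set"
    and z :: 'f
  assumes pointed: "pointed_variety ar E z"
  shows
    "(\<forall>(C :: 'a set) F X Y.
        in_variety ar E C F \<and> subalgebra ar F C X \<and> subalgebra ar F C Y \<longrightarrow>
        comm_CA ar E z C F X Y \<subseteq> comm_A1 ar E z C F X Y)
   \<and> (\<forall>(S :: 's set) P Q.
        P \<subseteq> S \<and> Q \<subseteq> S \<and> P \<inter> Q = {} \<longrightarrow>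
        (let A = free_carrier ar E S; F = free_ops ar E;
             X = generated ar F A (free_gen ar E ` P);
             Y = generated ar F A (free_gen ar E ` Q)
         in comm_CA ar E z A F X Y = comm_A1 ar E z A F X Y))"
proof (intro conjI allI impI)
  fix C :: "'a set" and F X Y
  show "comm_CA ar E z C F X Y \<subseteq> comm_A1 ar E z C F X Y" by (rule part_a[OF pointed])
next
  fix S :: "'s set" and P Q
  assume h: "P \<subseteq> S \<and> Q \<subseteq> S \<and> P \<inter> Q = {}"
  show "let A = free_carrier ar E S; F = free_ops ar E;
             X = generated ar F A (free_gen ar E ` P);
             Y = generated ar F A (free_gen ar E ` Q)
         in comm_CA ar E z A F X Y = comm_A1 ar E z A F X Y"
    unfolding Let_def
    by (intro equalityI part_a[OF pointed] part_b[OF pointed]) (use h in auto)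
qed


end
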